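(* Let $p:[0,\infty)\to\mathbb{R}$ be concave, increasing and continuous, and suppose its right derivative at $0$, $p'(0+)$, exists and satisfies $p'(0+)>0$. Then the function $F:\mathbb{R}^n\to\mathbb{R}$, $$F(x)=p'(0+)\|x\|_1-\sum_{i=1}^n p(|x_i|),$$ is convex on $\mathbb{R}^n$. *)

theory Defs
  imports "HOL-Analysis.Analysis"
begin

end

theory Submission
  imports Defs
begin

lemma tangent0:
  fixes p :: "real \<Rightarrow> real"
  assumes conc: "concave_on {0..} p"
    and der: "(p has_real_derivative d) (at 0 within {0..})"
    and y: "y \<ge> 0"
  shows "p y \<le> p 0 + d * y"
proof (cases "y = 0")
  case True then show ?thesis by simp
next
  case False
  with y have yp: "y > 0" by simp
  have lim: "((\<lambda>u. (p u - p 0) / (u - 0)) \<longlongrightarrow> d) (at_right 0)"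
  proof -
    have "at_right (0::real) \<le> at 0 within {0..}" by (rule at_le) auto
    then show ?thesis using der unfolding has_field_derivative_iff
      by (rule tendsto_mono)
  qed
  have ev: "eventually (\<lambda>u. (p y - p 0) / y \<le> (p u - p 0) / (u - 0)) (at_right 0)"
    using eventually_at_right_real[OF yp]
  proof eventually_elim
    case (elim u)
    then have u: "0 < u" "u < y" by auto
    define t where "t = u / y"
    have t: "0 \<le> t" "t \<le> 1" using u yp by (auto simp: t_def)
    have "p ((1 - t) *\<^sub>R 0 + t *\<^sub>R y) \<ge> (1 - t) * p 0 + t * p y"
      using concave_onD[OF conc t, of 0 y] y by auto
    moreover have "(1 - t) *\<^sub>R 0 + t *\<^sub>R y = u" using yp by (simp add: t_def)
    ultimately have "p u \<ge> p 0 + t * (p y - p 0)" by (simp add: algebra_simps)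
    then have "p u - p 0 \<ge> u * ((p y - p 0) / y)" by (simp add: t_def)
    then show ?case using u by (simp add: field_simps)
  qed
  have "(p y - p 0) / y \<le> d"
    by (rule tendsto_lowerbound[OF lim ev]) simp
  then show ?thesis using yp by (simp add: field_simps)
qed

lemma h_mono:
  fixes p :: "real \<Rightarrow> real"
  assumes conc: "concave_on {0..} p"
    and der: "(p has_real_derivative d) (at 0 within {0..})"
    and st: "0 \<le> s" "s \<le> t"
  shows "d * s - p s \<le> d * t - p t"
proof (cases "t = 0")
  case True then show ?thesis using st by simp
next
  case False
  then have tp: "t > 0" using st by simp
  define l where "l = s / t"
  have l: "0 \<le> l" "l \<le> 1" using st tp by (auto simp: l_def)
  have "p ((1 - l) *\<^sub>R 0 + l *\<^sub>R t) \<ge> (1 - l) * p 0 + l * p t"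
    using concave_onD[OF conc l, of 0 t] st by auto
  moreover have "(1 - l) *\<^sub>R 0 + l *\<^sub>R t = s" using tp by (simp add: l_def)
  ultimately have a: "p s \<ge> (1 - l) * p 0 + l * p t" by simp
  have b: "p t \<le> p 0 + d * t" using tangent0[OF conc der] st by simp
  have "d * s = l * (d * t)" using tp by (simp add: l_def)
  have c: "(1 - l) * (p t - p 0 - d * t) \<le> 0" using b l by (simp add: mult_nonneg_nonpos)
  have "p t - p s \<le> (1 - l) * (p t - p 0)" using a by (simp add: algebra_simps)
  also have "\<dots> \<le> (1 - l) * (d * t)" using c by (simp add: algebra_simps)
  also have "\<dots> = d * t - d * s" using \<open>d * s = l * (d * t)\<close> by (simp add: algebra_simps)
  finally show ?thesis by simp
qed

lemma g_convex:
  fixes p :: "real \<Rightarrow> real"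
  assumes conc: "concave_on {0..} p"
    and der: "(p has_real_derivative d) (at 0 within {0..})"
  shows "convex_on UNIV (\<lambda>x::real. d * \<bar>x\<bar> - p \<bar>x\<bar>)"
proof (rule convex_onI)
  fix t x y :: real
  assume t: "0 < t" "t < 1"
  let ?h = "\<lambda>s. d * s - p s"
  have hc: "convex_on {0..} ?h"
    by (rule convex_on_diff) (auto intro: conc convex_on_linorderI simp: algebra_simps)
  have "\<bar>(1 - t) *\<^sub>R x + t *\<^sub>R y\<bar> \<le> (1 - t) * \<bar>x\<bar> + t * \<bar>y\<bar>"
    using t by (simp add: abs_triangle_ineq[THEN order_trans] abs_mult)
  then have "?h \<bar>(1 - t) *\<^sub>R x + t *\<^sub>R y\<bar> \<le> ?h ((1 - t) * \<bar>x\<bar> + t * \<bar>y\<bar>)"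
    by (intro h_mono[OF conc der]) auto
  also have "\<dots> \<le> (1 - t) * ?h \<bar>x\<bar> + t * ?h \<bar>y\<bar>"
    using convex_onD[OF hc, of t "\<bar>x\<bar>" "\<bar>y\<bar>"] t by simp
  finally show "?h \<bar>(1 - t) *\<^sub>R x + t *\<^sub>R y\<bar> \<le> (1 - t) * ?h \<bar>x\<bar> + t * ?h \<bar>y\<bar>" .
qed simp

theorem proposition3p1:
  fixes p :: "real \<Rightarrow> real" and d :: real
  assumes "concave_on {0..} p"
    and "mono_on {0..} p"
    and "continuous_on {0..} p"
    and "(p has_real_derivative d) (at 0 within {0..})"
    and "d > 0"
  shows "convex_on UNIV
           (\<lambda>x :: real ^ 'n. d * (\<Sum>i\<in>UNIV. \<bar>x $ i\<bar>) - (\<Sum>i\<in>UNIV. p \<bar>x $ i\<bar>))"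
proof -
  have g: "convex_on UNIV (\<lambda>x::real. d * \<bar>x\<bar> - p \<bar>x\<bar>)"
    by (rule g_convex[OF assms(1) assms(4)])
  have eq: "(\<lambda>x :: real ^ 'n. d * (\<Sum>i\<in>UNIV. \<bar>x $ i\<bar>) - (\<Sum>i\<in>UNIV. p \<bar>x $ i\<bar>))
      = (\<lambda>x. \<Sum>i\<in>UNIV. d * \<bar>x $ i\<bar> - p \<bar>x $ i\<bar>)"
    by (simp add: sum_distrib_left sum_subtractf)
  have each: "convex_on UNIV (\<lambda>x :: real ^ 'n. d * \<bar>x $ i\<bar> - p \<bar>x $ i\<bar>)" for i
  proof (rule convex_onI)
    fix t :: real and x y :: "real ^ 'n"
    assume t: "0 < t" "t < 1"
    show "d * \<bar>((1 - t) *\<^sub>R x + t *\<^sub>R y) $ i\<bar> - p \<bar>((1 - t) *\<^sub>R x + t *\<^sub>R y) $ i\<bar>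
          \<le> (1 - t) * (d * \<bar>x $ i\<bar> - p \<bar>x $ i\<bar>) + t * (d * \<bar>y $ i\<bar> - p \<bar>y $ i\<bar>)"
      using convex_onD[OF g, of t "x $ i" "y $ i"] t by simp
  qed simp
  have "convex_on UNIV (\<lambda>x :: real ^ 'n. \<Sum>i\<in>A. d * \<bar>x $ i\<bar> - p \<bar>x $ i\<bar>)"
    if "finite A" for A
    using that
  proof (induction A rule: finite_induct)
    case empty then show ?case by (simp add: convex_on_const)
  next
    case (insert a A)
    then show ?case by (simp add: convex_on_add each)
  qed
  then show ?thesis unfolding eq by simp
qed

end
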